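(* Let $\mathcal{S}$ be a nonempty semigroup with set of idempotents $E(\mathcal{S})$. Let $T$ be a finite $\mathcal{S}$-valued sequence with $\prod(T)\cap E(\mathcal{S})=\emptyset$, let $x$ be a term of $T$, and let $T'$ denote the sequence obtained from $T$ by deleting one occurrence of the term $x$. Then $|\prod(T)\setminus \prod(T')|\ge 1$ (equivalently, $\lambda_{T'}(x)=|\prod(T'\cdot x)\setminus\prod(T')|\ge 1$, where $T'\cdot x$ is $T'$ with $x$ appended).
   Context: For a finite sequence $T=x_1x_2\cdots x_\ell$ of elements of a semigroup $(\mathcal{S},* )$, $\prod(T)$ denotes the set of all products $x_{i_{\sigma(1)}}*x_{i_{\sigma(2)}}*\cdots*x_{i_{\sigma(k)}}$, where $x_{i_1}\cdots x_{i_k}$ ranges over all nonempty subsequences of $T$ and $\sigma$ over all permutations of $\{1,\dots,k\}$ (so $\prod$ of the empty sequence is $\emptyset$). $E(\mathcal{S})$ is the set of $e\in\mathcal{S}$ with $e*e=e$. *)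

theory Defs
  imports Main "HOL-Library.Multiset"
begin

fun sprod :: "'a::semigroup_mult list \<Rightarrow> 'a" where
  "sprod [] = undefined"
| "sprod (x # xs) = foldl (*) x xs"

text \<open>A nonempty subsequence followed by a permutation is exactly a nonempty list ys
  whose multiset of terms is a sub-multiset of that of T.\<close>
definition Prods :: "'a::semigroup_mult list \<Rightarrow> 'a set" where
  "Prods T = {sprod ys | ys. ys \<noteq> [] \<and> mset ys \<subseteq># mset T}"

definition idempotents :: "'a::semigroup_mult set" where
  "idempotents = {e. e * e = e}"

end

theory Submission
  imports Defs
begin

fun pw :: "'a::semigroup_mult \<Rightarrow> nat \<Rightarrow> 'a" where
  "pw x 0 = x"
| "pw x (Suc n) = pw x n * x"

lemma pw_add: "pw x (Suc (m + n)) = pw x m * pw x n"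
  by (induction n) (simp_all add: mult.assoc)

lemma pw_in: "x \<in> A \<Longrightarrow> \<forall>a\<in>A. a * x \<in> A \<Longrightarrow> pw x n \<in> A"
  by (induction n) auto

lemma pw_shift: "pw x i = pw x j \<Longrightarrow> pw x (i + m) = pw x (j + m)"
  by (induction m) simp_all

lemma pw_period:
  assumes "pw x i = pw x (i + p)" "m \<ge> i"
  shows "pw x (m + p * t) = pw x m"
proof (induction t)
  case 0 then show ?case by simp
next
  case (Suc t)
  have "pw x (m + p * Suc t) = pw x (i + p + (m - i + p * t))"
    using assms(2) by (simp add: algebra_simps)
  also have "\<dots> = pw x (i + (m - i + p * t))"
    using pw_shift[OF assms(1)[symmetric]] by (simp add: add.assoc)
  also have "\<dots> = pw x (m + p * t)" using assms(2) by simp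
  finally show ?case using Suc by simp
qed

lemma idem_exists:
  fixes x :: "'a::semigroup_mult"
  assumes "finite A" "x \<in> A" "\<forall>a\<in>A. a * x \<in> A"
  shows "\<exists>e\<in>A. e * e = e"
proof -
  have "pw x ` UNIV \<subseteq> A" using pw_in[OF assms(2,3)] by blast
  hence "finite (range (pw x))" using assms(1) finite_subset by blast
  hence "\<not> inj (pw x)" using finite_imageD infinite_UNIV_nat by blast
  then obtain i j where ij: "i \<noteq> j" "pw x i = pw x j" unfolding inj_def by blast
  obtain a p where ap: "pw x a = pw x (a + p)" "p > 0"
  proof (cases "i < j")
    case True then show ?thesis using that[of i "j - i"] ij by simp
  next
    case False then show ?thesis using that[of j "i - j"] ij by simp
  qed
  define n where "n = p * (a + 1) - 1"
  have n1: "Suc n = p * (a + 1)" using ap(2) unfolding n_def by simp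
  have na: "n \<ge> a"
    proof -
    have "p * (a + 1) \<ge> 1 * (a + 1)" using ap(2) by (intro mult_right_mono) auto
    then show ?thesis using n1 by simp
  qed
  have "pw x n * pw x n = pw x (Suc (n + n))" by (rule pw_add[symmetric])
  also have "Suc (n + n) = n + p * (a + 1)" using n1 by simp
  also have "pw x (n + p * (a + 1)) = pw x n" using pw_period[OF ap(1) na] .
  finally have "pw x n * pw x n = pw x n" .
  moreover have "pw x n \<in> A" by (rule pw_in[OF assms(2,3)])
  ultimately show ?thesis by (rule bexI)
qed

lemma Prods_finite: "finite (Prods T)"
proof -
  have "Prods T \<subseteq> sprod ` {ys. set ys \<subseteq> set T \<and> length ys \<le> length T}"
  proof
    fix a assume "a \<in> Prods T"
    then obtain ys where ys: "a = sprod ys" "mset ys \<subseteq># mset T"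
      unfolding Prods_def by blast
    have "set ys \<subseteq> set T" using set_mset_mono[OF ys(2)] by simp
    moreover have "length ys \<le> length T" using size_mset_mono[OF ys(2)] by simp
    ultimately show "a \<in> sprod ` {ys. set ys \<subseteq> set T \<and> length ys \<le> length T}"
      using ys(1) by blast
  qed
  moreover have "finite {ys. set ys \<subseteq> set T \<and> length ys \<le> length T}"
    by (rule finite_lists_length_le[OF finite_set])
  ultimately show ?thesis by (rule finite_subset[OF _ finite_imageI])
qed

theorem lemma3p1:
  fixes T :: "'a::semigroup_mult list" and x :: 'a
  assumes "Prods T \<inter> idempotents = {}"
    and "x \<in> set T"
  shows "card (Prods T - Prods (remove1 x T)) \<ge> 1"
proof -
  let ?T' = "remove1 x T"
  have mT: "add_mset x (mset ?T') = mset T" using assms(2) by (simp add: insert_DiffM)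
  have sub: "Prods ?T' \<subseteq> Prods T"
    proof
    fix a assume "a \<in> Prods ?T'"
    then obtain ys where ys: "a = sprod ys" "ys \<noteq> []" "mset ys \<subseteq># mset ?T'"
      unfolding Prods_def by blast
    have "mset ?T' \<subseteq># mset T" by simp
    then have "mset ys \<subseteq># mset T" using ys(3) by (rule subset_mset.order_trans[rotated])
    then show "a \<in> Prods T" using ys unfolding Prods_def by blast
  qed
  have "Prods T - Prods ?T' \<noteq> {}"
  proof
    assume e: "Prods T - Prods ?T' = {}"
    have xin: "x \<in> Prods T" unfolding Prods_def
      by (rule CollectI, rule exI[of _ "[x]"]) (simp add: assms(2))
    have cl: "\<forall>a\<in>Prods ?T'. a * x \<in> Prods T"
    proof
      fix a assume "a \<in> Prods ?T'"
      then obtain ys where ys: "a = sprod ys" "ys \<noteq> []" "mset ys \<subseteq># mset ?T'"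
        unfolding Prods_def by blast
            have "add_mset x (mset ys) \<subseteq># add_mset x (mset ?T')" using ys(3) by simp
      then have "mset (ys @ [x]) \<subseteq># mset T" unfolding mT by simp
      moreover have "sprod (ys @ [x]) = a * x" using ys(1,2) by (cases ys) auto
      ultimately show "a * x \<in> Prods T" unfolding Prods_def
        by (intro CollectI exI[of _ "ys @ [x]"]) simp
    qed
    have "\<exists>e\<in>Prods ?T'. e * e = e"
      by (rule idem_exists[OF finite_subset[OF sub Prods_finite]]) (use e xin cl in blast)+
    then show False using assms(1) sub unfolding idempotents_def by blast
  qed
  moreover have "finite (Prods T - Prods ?T')" using Prods_finite[of T] by (rule finite_Diff)
  ultimately show ?thesis by (simp add: Suc_le_eq card_gt_0_iff)
qed

end
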